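(* For all $\alpha,\beta\in[0,1]$, the star product $M_{\beta,\alpha}\ast M_{\alpha,\beta}$ of Marshall–Olkin copulas is a lower semilinear copula.
   Context: A (bivariate) copula is a distribution function on $[0,1]^2$ with uniform marginals. For $\alpha,\beta\in[0,1]$ the Marshall–Olkin copula is $M_{\alpha,\beta}(u,v)=\min\{u^{1-\alpha}v,\,uv^{1-\beta}\}$. The star product of copulas is $(A\ast B)(x,y)=\int_{[0,1]}\partial_2A(x,s)\,\partial_1B(s,y)\,ds$. A copula $C$ is lower semilinear if for every $x\in(0,1]$ the mappings $t\mapsto C(t,x)$ and $t\mapsto C(x,t)$ are linear on $[0,x]$. *)

theory Defs
  imports "HOL-Analysis.Analysis"
begin

text \<open>A bivariate copula, represented as a real function whose values on the
unit square matter: grounded, uniform margins, and 2-increasing on [0,1]^2.\<close>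
definition is_copula :: "(real \<Rightarrow> real \<Rightarrow> real) \<Rightarrow> bool" where
  "is_copula C \<longleftrightarrow>
     (\<forall>u\<in>{0..1}. C u 0 = 0 \<and> C 0 u = 0 \<and> C u 1 = u \<and> C 1 u = u) \<and>
     (\<forall>u1 u2 v1 v2. 0 \<le> u1 \<and> u1 \<le> u2 \<and> u2 \<le> 1 \<and> 0 \<le> v1 \<and> v1 \<le> v2 \<and> v2 \<le> 1 \<longrightarrow>
        C u2 v2 - C u2 v1 - C u1 v2 + C u1 v1 \<ge> 0)"

definition MO :: "real \<Rightarrow> real \<Rightarrow> real \<Rightarrow> real \<Rightarrow> real" where
  "MO \<alpha> \<beta> u v = min (u powr (1 - \<alpha>) * v) (u * v powr (1 - \<beta>))"

definition d1 :: "(real \<Rightarrow> real \<Rightarrow> real) \<Rightarrow> real \<Rightarrow> real \<Rightarrow> real" where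
  "d1 A x y = deriv (\<lambda>t. A t y) x"

definition d2 :: "(real \<Rightarrow> real \<Rightarrow> real) \<Rightarrow> real \<Rightarrow> real \<Rightarrow> real" where
  "d2 A x y = deriv (\<lambda>t. A x t) y"

definition star_prod :: "(real \<Rightarrow> real \<Rightarrow> real) \<Rightarrow> (real \<Rightarrow> real \<Rightarrow> real) \<Rightarrow> real \<Rightarrow> real \<Rightarrow> real" where
  "star_prod A B x y = (LINT s:{0..1}|lborel. d2 A x s * d1 B s y)"

definition lower_semilinear :: "(real \<Rightarrow> real \<Rightarrow> real) \<Rightarrow> bool" where
  "lower_semilinear C \<longleftrightarrow>
     (\<forall>x\<in>{0<..1}.
        (\<exists>a b. \<forall>t\<in>{0..x}. C t x = a * t + b) \<and>
        (\<exists>a b. \<forall>t\<in>{0..x}. C x t = a * t + b))"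

end

theory Submission
  imports Defs
begin


definition pp :: "real \<Rightarrow> real \<Rightarrow> real \<Rightarrow> real \<Rightarrow> real" where
  "pp \<alpha> \<beta> x s = (if s powr \<alpha> < x powr \<beta> then x powr (1-\<beta>) else (1-\<alpha>) * x * s powr (-\<alpha>))"

lemma key_less:
  fixes x t a b :: real
  assumes "0 < x" "0 < t"
  shows "(x powr (1-b) * t < x * t powr (1-a)) \<longleftrightarrow> (t powr a < x powr b)"
proof -
  have e1: "x powr (1-b) = x / x powr b" using assms by (simp add: powr_diff)
  have e2: "t powr (1-a) = t / t powr a" using assms by (simp add: powr_diff)
  have p: "x powr b > 0" "t powr a > 0" using assms by auto
  show ?thesis unfolding e1 e2 using assms p
    by (simp add: field_simps)
qed

lemma key_le:
  fixes x t a b :: real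
  assumes "0 < x" "0 < t"
  shows "(x powr (1-b) * t \<le> x * t powr (1-a)) \<longleftrightarrow> (t powr a \<le> x powr b)"
proof -
  have e1: "x powr (1-b) = x / x powr b" using assms by (simp add: powr_diff)
  have e2: "t powr (1-a) = t / t powr a" using assms by (simp add: powr_diff)
  have p: "x powr b > 0" "t powr a > 0" using assms by auto
  show ?thesis unfolding e1 e2 using assms p
    by (simp add: field_simps)
qed

lemma MO_eq1: "0 < x \<Longrightarrow> 0 < t \<Longrightarrow> t powr \<alpha> \<le> x powr \<beta> \<Longrightarrow> MO \<beta> \<alpha> x t = x powr (1-\<beta>) * t"
  unfolding MO_def using key_le[of x t \<beta> \<alpha>] by auto

lemma MO_eq2: "0 < x \<Longrightarrow> 0 < t \<Longrightarrow> x powr \<beta> \<le> t powr \<alpha> \<Longrightarrow> MO \<beta> \<alpha> x t = x * t powr (1-\<alpha>)"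
  unfolding MO_def using key_less[of x t \<beta> \<alpha>] by auto

lemma MO_zero1[simp]: "MO \<beta> \<alpha> 0 t = 0" unfolding MO_def by simp
lemma MO_zero2[simp]: "MO \<beta> \<alpha> x 0 = 0" unfolding MO_def by simp

lemma MO_swap: "MO \<alpha> \<beta> t y = MO \<beta> \<alpha> y t"
  unfolding MO_def by (simp add: min.commute mult.commute)

lemma pp_zero[simp]: "pp \<alpha> \<beta> 0 s = 0"
  unfolding pp_def by (simp add: not_less)

lemma ev_pos: "0 < (s::real) \<Longrightarrow> eventually (\<lambda>t. 0 < t) (nhds s)"
  using order_tendstoD(1)[OF filterlim_ident[of "nhds s"]] by simp

lemma ev_powr_tendsto: "0 < (s::real) \<Longrightarrow> ((\<lambda>t. t powr a) \<longlongrightarrow> s powr a) (nhds s)"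
  by (intro tendsto_powr filterlim_ident tendsto_const) auto

lemma MO_deriv:
  assumes x: "x \<in> {0..1}" and s: "0 < s" and a: "\<alpha> \<in> {0..1}" and b: "\<beta> \<in> {0..1}"
    and ne: "\<alpha> = 0 \<or> s powr \<alpha> \<noteq> x powr \<beta>"
  shows "((\<lambda>t. MO \<beta> \<alpha> x t) has_real_derivative pp \<alpha> \<beta> x s) (at s)"
proof (cases "x = 0")
  case True
  then show ?thesis by simp
next
  case False
  then have x0: "0 < x" using x by auto
  have xb1: "x powr \<beta> \<le> 1" using x b by (intro powr_le1) auto
  show ?thesis
  proof (cases "\<alpha> = 0")
    case True
    have pe: "pp \<alpha> \<beta> x s = x" using True s xb1 unfolding pp_def by auto
    have ev: "eventually (\<lambda>t. MO \<beta> \<alpha> x t = x * t) (nhds s)"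
      using ev_pos[OF s] by eventually_elim (use True x0 xb1 MO_eq2[of x _ \<beta> \<alpha>] in auto)
    have "((\<lambda>t. x * t) has_real_derivative x) (at s)"
      by (auto intro!: derivative_eq_intros)
    then show ?thesis unfolding pe using DERIV_cong_ev[OF refl ev refl] by simp
  next
    case False
    then have ne': "s powr \<alpha> \<noteq> x powr \<beta>" using ne by auto
    show ?thesis
    proof (cases "s powr \<alpha> < x powr \<beta>")
      case True
      have pe: "pp \<alpha> \<beta> x s = x powr (1-\<beta>)" using True unfolding pp_def by auto
      have ev1: "eventually (\<lambda>t. t powr \<alpha> < x powr \<beta>) (nhds s)"
        using order_tendstoD(2)[OF ev_powr_tendsto[OF s] True] .
      have ev: "eventually (\<lambda>t. MO \<beta> \<alpha> x t = x powr (1-\<beta>) * t) (nhds s)"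
        using ev_pos[OF s] ev1 by eventually_elim (use x0 MO_eq1[of x _ \<alpha> \<beta>] in auto)
      have "((\<lambda>t. x powr (1-\<beta>) * t) has_real_derivative x powr (1-\<beta>)) (at s)"
        by (auto intro!: derivative_eq_intros)
      then show ?thesis unfolding pe using DERIV_cong_ev[OF refl ev refl] by simp
    next
      case False
      then have lt: "x powr \<beta> < s powr \<alpha>" using ne' by auto
      have pe: "pp \<alpha> \<beta> x s = (1-\<alpha>) * x * s powr (-\<alpha>)" using False unfolding pp_def by auto
      have ev1: "eventually (\<lambda>t. x powr \<beta> < t powr \<alpha>) (nhds s)"
        using order_tendstoD(1)[OF ev_powr_tendsto[OF s] lt] .
      have ev: "eventually (\<lambda>t. MO \<beta> \<alpha> x t = x * t powr (1-\<alpha>)) (nhds s)"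
        using ev_pos[OF s] ev1 by eventually_elim (use x0 MO_eq2[of x _ \<beta> \<alpha>] in auto)
      have "((\<lambda>t. x * t powr (1-\<alpha>)) has_real_derivative x * ((1-\<alpha>) * s powr ((1-\<alpha>) - 1))) (at s)"
        by (intro DERIV_cmult has_real_derivative_powr s)
      moreover have "x * ((1-\<alpha>) * s powr ((1-\<alpha>) - 1)) = (1-\<alpha>) * x * s powr (-\<alpha>)" by simp
      ultimately show ?thesis unfolding pe using DERIV_cong_ev[OF refl ev refl] by (simp add: mult_ac)
    qed
  qed
qed



lemma pp_meas[measurable]: "(\<lambda>s. pp \<alpha> \<beta> x s) \<in> borel_measurable borel"
  unfolding pp_def by measurable

lemma set_int_fin_diff:
  fixes f g :: "real \<Rightarrow> real"
  assumes "finite X" "\<And>s. s \<in> A \<Longrightarrow> s \<notin> X \<Longrightarrow> f s = g s"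
  shows "(LINT s:A|lborel. f s) = (LINT s:A|lborel. g s)"
  unfolding set_lebesgue_integral_def
  by (rule integral_discrete_difference[of X]) (use assms in \<open>auto simp: countable_finite indicator_def\<close>)


lemma bdd_int:
  fixes f :: "real \<Rightarrow> real"
  assumes "f \<in> borel_measurable borel" "\<And>s. s \<in> {0..1} \<Longrightarrow> \<bar>f s\<bar> \<le> B"
  shows "set_integrable lborel {0..1} f"
proof (rule set_integrable_bound[of lborel "{0..1::real}" "\<lambda>_. B"])
  show "set_integrable lborel {0..1::real} (\<lambda>_. B)"
    using borel_integrable_atLeastAtMost'[of 0 1 "\<lambda>_. B"] by simp
  show "set_borel_measurable lborel {0..1} f"
    unfolding set_borel_measurable_def using assms(1) by measurable
  show "AE x in lborel. x \<in> {0..1} \<longrightarrow> norm (f x) \<le> norm B"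
    using assms(2) by (auto intro!: AE_I2) (smt (verit) assms(2))
qed



lemma badset:
  fixes \<alpha> \<beta> x s :: real
  assumes "s \<in> {0..1}" "s \<notin> {0, (x powr \<beta>) powr (1/\<alpha>)}"
  shows "0 < s \<and> (\<alpha> = 0 \<or> s powr \<alpha> \<noteq> x powr \<beta>)"
proof -
  have s0: "0 < s" using assms by auto
  moreover have "\<alpha> = 0 \<or> s powr \<alpha> \<noteq> x powr \<beta>"
  proof (rule ccontr)
    assume "\<not> ?thesis"
    then have a: "\<alpha> \<noteq> 0" and e: "s powr \<alpha> = x powr \<beta>" by auto
    have "(x powr \<beta>) powr (1/\<alpha>) = s powr (\<alpha> * (1/\<alpha>))" unfolding e[symmetric] by (simp add: powr_powr)
    also have "\<dots> = s" using a s0 by simp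
    finally show False using assms by auto
  qed
  ultimately show ?thesis by blast
qed

lemma G_eq:
  assumes x: "x \<in> {0..1}" and a: "\<alpha> \<in> {0..1}" and b: "\<beta> \<in> {0..1}"
    and s: "s \<in> {0..1}" "s \<notin> {0, (x powr \<beta>) powr (1/\<alpha>)}"
  shows "d2 (MO \<beta> \<alpha>) x s = pp \<alpha> \<beta> x s"
proof -
  have s0: "0 < s" and ne: "\<alpha> = 0 \<or> s powr \<alpha> \<noteq> x powr \<beta>" using badset[OF s] by auto
  have "((\<lambda>t. MO \<beta> \<alpha> x t) has_real_derivative pp \<alpha> \<beta> x s) (at s)"
    by (rule MO_deriv[OF x s0 a b ne])
  then show ?thesis unfolding d2_def by (rule DERIV_imp_deriv)
qed

lemma star_eq:
  assumes x: "x \<in> {0..1}" and y: "y \<in> {0..1}" and a: "\<alpha> \<in> {0..1}" and b: "\<beta> \<in> {0..1}"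
  shows "star_prod (MO \<beta> \<alpha>) (MO \<alpha> \<beta>) x y = (LINT s:{0..1}|lborel. pp \<alpha> \<beta> x s * pp \<alpha> \<beta> y s)"
proof -
  have d1e: "d1 (MO \<alpha> \<beta>) s y = d2 (MO \<beta> \<alpha>) y s" for s
  proof -
    have "(\<lambda>t. MO \<alpha> \<beta> t y) = (\<lambda>t. MO \<beta> \<alpha> y t)" by (rule ext) (rule MO_swap)
    then show ?thesis unfolding d1_def d2_def by simp
  qed
  show ?thesis unfolding star_prod_def d1e
  proof (rule set_int_fin_diff[of "{0, (x powr \<beta>) powr (1/\<alpha>)} \<union> {0, (y powr \<beta>) powr (1/\<alpha>)}"])
    fix s assume s: "s \<in> {0..1}" "s \<notin> {0, (x powr \<beta>) powr (1/\<alpha>)} \<union> {0, (y powr \<beta>) powr (1/\<alpha>)}"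
    then have s1: "s \<notin> {0, (x powr \<beta>) powr (1/\<alpha>)}" and s2: "s \<notin> {0, (y powr \<beta>) powr (1/\<alpha>)}" by blast+
    show "d2 (MO \<beta> \<alpha>) x s * d2 (MO \<beta> \<alpha>) y s = pp \<alpha> \<beta> x s * pp \<alpha> \<beta> y s"
      using G_eq[OF x a b s(1) s1] G_eq[OF y a b s(1) s2] by simp
  qed simp
qed



lemma MO_cont:
  assumes u: "u \<in> {0..1}" and a: "\<alpha> \<in> {0..1}" and b: "\<beta> \<in> {0..1}"
  shows "continuous_on {0..1} (\<lambda>t. MO \<beta> \<alpha> u t)"
proof -
  have "continuous (at t within {0..1}) (\<lambda>t. MO \<beta> \<alpha> u t)" if t: "t \<in> {0..1}" for t
  proof (cases "t = 0")
    case False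
    then have t0: "0 < t" using t by auto
    have "isCont (\<lambda>t. min (u powr (1-\<beta>) * t) (u * t powr (1-\<alpha>))) t"
      using t0 by (intro continuous_intros) auto
    then show ?thesis unfolding MO_def[abs_def] by (rule continuous_at_imp_continuous_at_within)
  next
    case True
    have up: "((\<lambda>t. u powr (1-\<beta>) * t) \<longlongrightarrow> 0) (at 0 within {0..1})"
      by (auto intro!: tendsto_eq_intros)
    have ev1: "eventually (\<lambda>t. 0 \<le> MO \<beta> \<alpha> u t) (at 0 within {0..1})"
      using u by (auto simp: eventually_at_filter MO_def)
    have ev2: "eventually (\<lambda>t. MO \<beta> \<alpha> u t \<le> u powr (1-\<beta>) * t) (at 0 within {0..1})"
      by (auto simp: eventually_at_filter MO_def)
    have "((\<lambda>t. MO \<beta> \<alpha> u t) \<longlongrightarrow> 0) (at 0 within {0..1})"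
      by (rule tendsto_sandwich[OF ev1 ev2 tendsto_const up])
    then show ?thesis using True by (simp add: continuous_within)
  qed
  then show ?thesis by (simp add: continuous_on_eq_continuous_within)
qed



lemma pp_nonneg:
  assumes "x \<in> {0..1}" "0 \<le> s" "\<alpha> \<in> {0..1}"
  shows "0 \<le> pp \<alpha> \<beta> x s"
  using assms unfolding pp_def by auto

lemma aux_bound:
  fixes x s :: real
  assumes "0 < x" "0 < s" "x powr \<beta> \<le> s powr \<alpha>"
  shows "x * s powr (-\<alpha>) \<le> x powr (1-\<beta>)"
proof -
  have e1: "x powr (1-\<beta>) = x / x powr \<beta>" using assms by (simp add: powr_diff)
  have e2: "x * s powr (-\<alpha>) = x / s powr \<alpha>" using assms by (simp add: powr_minus divide_inverse)
  have p: "x powr \<beta> > 0" using assms by auto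
  show ?thesis unfolding e1 e2 using assms p by (intro divide_left_mono) auto
qed

lemma pp_le1:
  assumes x: "x \<in> {0..1}" and s: "s \<in> {0..1}" and a: "\<alpha> \<in> {0..1}" and b: "\<beta> \<in> {0..1}"
  shows "pp \<alpha> \<beta> x s \<le> 1"
proof (cases "s powr \<alpha> < x powr \<beta>")
  case True
  then show ?thesis using x b by (simp add: pp_def powr_le1)
next
  case False
  show ?thesis
  proof (cases "x = 0 \<or> s = 0")
    case True
    then show ?thesis using False by (auto simp: pp_def)
  next
    case nz: False
    have "(1-\<alpha>) * x * s powr (-\<alpha>) \<le> x * s powr (-\<alpha>)"
      using a x by (intro mult_right_mono mult_left_le_one_le) auto
    also have "\<dots> \<le> x powr (1-\<beta>)" using nz x s False by (intro aux_bound) auto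
    also have "\<dots> \<le> 1" using x b by (intro powr_le1) auto
    finally show ?thesis using False by (simp add: pp_def)
  qed
qed

lemma pp_mono:
  assumes x1: "x1 \<in> {0..1}" and x2: "x2 \<in> {0..1}" and le: "x1 \<le> x2" and s: "s \<in> {0..1}"
    and a: "\<alpha> \<in> {0..1}" and b: "\<beta> \<in> {0..1}"
  shows "pp \<alpha> \<beta> x1 s \<le> pp \<alpha> \<beta> x2 s"
proof -
  have m: "x1 powr \<beta> \<le> x2 powr \<beta>" using x1 le b by (intro powr_mono2) auto
  have m2: "x1 powr (1-\<beta>) \<le> x2 powr (1-\<beta>)" using x1 le b by (intro powr_mono2) auto
  show ?thesis
  proof (cases "s powr \<alpha> < x1 powr \<beta>")
    case True
    then have "s powr \<alpha> < x2 powr \<beta>" using m by linarith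
    then show ?thesis using True m2 by (simp add: pp_def)
  next
    case F1: False
    show ?thesis
    proof (cases "s powr \<alpha> < x2 powr \<beta>")
      case True
      have "(1-\<alpha>) * x1 * s powr (-\<alpha>) \<le> x1 powr (1-\<beta>)"
      proof (cases "x1 = 0 \<or> s = 0")
        case True then show ?thesis by auto
      next
        case nz: False
        have "(1-\<alpha>) * x1 * s powr (-\<alpha>) \<le> x1 * s powr (-\<alpha>)"
          using a x1 by (intro mult_right_mono mult_left_le_one_le) auto
        also have "\<dots> \<le> x1 powr (1-\<beta>)" using nz x1 s F1 by (intro aux_bound) auto
        finally show ?thesis .
      qed
      then show ?thesis using True F1 m2 by (simp add: pp_def)
    next
      case False
      have "(1-\<alpha>) * x1 * s powr (-\<alpha>) \<le> (1-\<alpha>) * x2 * s powr (-\<alpha>)"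
        using a le by (intro mult_right_mono mult_left_mono) auto
      then show ?thesis using False F1 by (simp add: pp_def)
    qed
  qed
qed

lemma pp_one:
  assumes s: "s \<in> {0<..<1}" and a: "\<alpha> \<in> {0..1}"
  shows "pp \<alpha> \<beta> 1 s = 1"
proof (cases "\<alpha> = 0")
  case True then show ?thesis using s by (simp add: pp_def)
next
  case False
  then have "s powr \<alpha> < 1 powr \<alpha>" using s a by (intro powr_less_mono2) auto
  then show ?thesis by (simp add: pp_def)
qed

lemma pp_int1:
  assumes x: "x \<in> {0..1}" and a: "\<alpha> \<in> {0..1}" and b: "\<beta> \<in> {0..1}"
  shows "set_integrable lborel {0..1} (\<lambda>s. pp \<alpha> \<beta> x s)"
  by (rule bdd_int[where B=1]) (use pp_le1[OF x _ a b] pp_nonneg[OF x _ a] in \<open>auto\<close>)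

lemma pp_int2:
  assumes x: "x \<in> {0..1}" and y: "y \<in> {0..1}" and a: "\<alpha> \<in> {0..1}" and b: "\<beta> \<in> {0..1}"
  shows "set_integrable lborel {0..1} (\<lambda>s. pp \<alpha> \<beta> x s * pp \<alpha> \<beta> y s)"
proof (rule bdd_int[where B=1])
  show "(\<lambda>s. pp \<alpha> \<beta> x s * pp \<alpha> \<beta> y s) \<in> borel_measurable borel" by measurable
  fix s :: real assume s: "s \<in> {0..1}"
  have "0 \<le> pp \<alpha> \<beta> x s" "pp \<alpha> \<beta> x s \<le> 1" "0 \<le> pp \<alpha> \<beta> y s" "pp \<alpha> \<beta> y s \<le> 1"
    using pp_le1[OF x s a b] pp_le1[OF y s a b] pp_nonneg[OF x _ a] pp_nonneg[OF y _ a] s by auto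
  then show "\<bar>pp \<alpha> \<beta> x s * pp \<alpha> \<beta> y s\<bar> \<le> 1" by (simp add: abs_mult mult_le_one)
qed



lemma int_pp:
  assumes u: "u \<in> {0..1}" and c: "c \<in> {0..1}" and a: "\<alpha> \<in> {0..1}" and b: "\<beta> \<in> {0..1}"
  shows "(LINT s:{0..c}|lborel. pp \<alpha> \<beta> u s) = MO \<beta> \<alpha> u c"
proof -
  have si: "set_integrable lborel {0..c} (\<lambda>s. pp \<alpha> \<beta> u s)"
    by (rule set_integrable_subset[OF pp_int1[OF u a b]]) (use c in auto)
  have "((\<lambda>s. pp \<alpha> \<beta> u s) has_integral (MO \<beta> \<alpha> u c - MO \<beta> \<alpha> u 0)) {0..c}"
  proof (rule fundamental_theorem_of_calculus_strong[of "{0, (u powr \<beta>) powr (1/\<alpha>)}"])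
    show "finite {0, (u powr \<beta>) powr (1/\<alpha>)}" by simp
    show "0 \<le> c" using c by simp
    show "continuous_on {0..c} (MO \<beta> \<alpha> u)"
      by (rule continuous_on_subset[OF MO_cont[OF u a b]]) (use c in auto)
    fix s assume s: "s \<in> {0..c} - {0, (u powr \<beta>) powr (1/\<alpha>)}"
    then have s1: "s \<in> {0..1}" "s \<notin> {0, (u powr \<beta>) powr (1/\<alpha>)}" using c by auto
    have s0: "0 < s" and ne: "\<alpha> = 0 \<or> s powr \<alpha> \<noteq> u powr \<beta>" using badset[OF s1] by auto
    have "((\<lambda>t. MO \<beta> \<alpha> u t) has_real_derivative pp \<alpha> \<beta> u s) (at s)"
      by (rule MO_deriv[OF u s0 a b ne])
    then show "(MO \<beta> \<alpha> u has_vector_derivative pp \<alpha> \<beta> u s) (at s)"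
      by (simp add: has_real_derivative_iff_has_vector_derivative)
  qed
  then have "integral {0..c} (\<lambda>s. pp \<alpha> \<beta> u s) = MO \<beta> \<alpha> u c" by (simp add: integral_unique)
  then show ?thesis using set_borel_integral_eq_integral(2)[OF si] by simp
qed

lemma MO_u1:
  assumes u: "u \<in> {0..1}" and b: "\<beta> \<in> {0..1}"
  shows "MO \<beta> \<alpha> u 1 = u"
proof -
  have "u powr 1 \<le> u powr (1-\<beta>)" using u b by (intro powr_mono') auto
  then have "u \<le> u powr (1-\<beta>)" using u by simp
  then show ?thesis unfolding MO_def by simp
qed

lemma C_u1:
  assumes u: "u \<in> {0..1}" and a: "\<alpha> \<in> {0..1}" and b: "\<beta> \<in> {0..1}"
  shows "(LINT s:{0..1}|lborel. pp \<alpha> \<beta> u s * pp \<alpha> \<beta> 1 s) = u"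
proof -
  have "(LINT s:{0..1}|lborel. pp \<alpha> \<beta> u s * pp \<alpha> \<beta> 1 s) = (LINT s:{0..1}|lborel. pp \<alpha> \<beta> u s)"
    by (rule set_int_fin_diff[of "{0,1}"]) (use pp_one[OF _ a] in auto)
  also have "\<dots> = MO \<beta> \<alpha> u 1" by (rule int_pp[OF u _ a b]) simp
  also have "\<dots> = u" by (rule MO_u1[OF u b])
  finally show ?thesis .
qed

lemma two_inc:
  assumes u1: "u1 \<in> {0..1}" and u2: "u2 \<in> {0..1}" and v1: "v1 \<in> {0..1}" and v2: "v2 \<in> {0..1}"
    and le1: "u1 \<le> u2" and le2: "v1 \<le> v2" and a: "\<alpha> \<in> {0..1}" and b: "\<beta> \<in> {0..1}"
  defines "F \<equiv> \<lambda>x y. (LINT s:{0..1}|lborel. pp \<alpha> \<beta> x s * pp \<alpha> \<beta> y s)"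
  shows "F u2 v2 - F u2 v1 - F u1 v2 + F u1 v1 \<ge> 0"
proof -
  let ?p = "pp \<alpha> \<beta>"
  have i22: "set_integrable lborel {0..1} (\<lambda>s. ?p u2 s * ?p v2 s)" by (rule pp_int2[OF u2 v2 a b])
  have i21: "set_integrable lborel {0..1} (\<lambda>s. ?p u2 s * ?p v1 s)" by (rule pp_int2[OF u2 v1 a b])
  have i12: "set_integrable lborel {0..1} (\<lambda>s. ?p u1 s * ?p v2 s)" by (rule pp_int2[OF u1 v2 a b])
  have i11: "set_integrable lborel {0..1} (\<lambda>s. ?p u1 s * ?p v1 s)" by (rule pp_int2[OF u1 v1 a b])
  have "F u2 v2 - F u2 v1 - F u1 v2 + F u1 v1 =
     (LINT s:{0..1}|lborel. ?p u2 s * ?p v2 s - ?p u2 s * ?p v1 s - ?p u1 s * ?p v2 s + ?p u1 s * ?p v1 s)"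
    unfolding F_def
    using set_integral_diff(2)[OF i22 i21] set_integral_diff(1)[OF i22 i21]
      set_integral_diff(2)[OF set_integral_diff(1)[OF i22 i21] i12]
      set_integral_diff(1)[OF set_integral_diff(1)[OF i22 i21] i12]
      set_integral_add(2)[OF set_integral_diff(1)[OF set_integral_diff(1)[OF i22 i21] i12] i11]
    by simp
  also have "\<dots> = (LINT s:{0..1}|lborel. (?p u2 s - ?p u1 s) * (?p v2 s - ?p v1 s))"
    by (simp add: algebra_simps)
  also have "\<dots> \<ge> 0"
    unfolding set_lebesgue_integral_def
  proof (rule Bochner_Integration.integral_nonneg)
    fix s :: real
    have "s \<in> {0..1} \<Longrightarrow> 0 \<le> (?p u2 s - ?p u1 s) * (?p v2 s - ?p v1 s)"
      using pp_mono[OF u1 u2 le1 _ a b, of s] pp_mono[OF v1 v2 le2 _ a b, of s] by simp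
    then show "0 \<le> indicator {0..1} s *\<^sub>R ((?p u2 s - ?p u1 s) * (?p v2 s - ?p v1 s))"
      by (auto simp: indicator_def)
  qed
  finally show ?thesis .
qed



lemma lsl:
  assumes x: "x \<in> {0<..1}" and a: "\<alpha> \<in> {0..1}" and b: "\<beta> \<in> {0..1}"
  shows "\<exists>A. \<forall>t\<in>{0..x}. (LINT s:{0..1}|lborel. pp \<alpha> \<beta> t s * pp \<alpha> \<beta> x s) = A * t"
proof -
  let ?p = "pp \<alpha> \<beta>"
  define c where "c = (if \<alpha> = 0 then 0 else x powr (\<beta>/\<alpha>))"
  have x0: "0 < x" and x1: "x \<in> {0..1}" using x by auto
  have c01: "c \<in> {0..1}" unfolding c_def using x a b by (auto intro!: powr_le1)
  have cpow: "c powr \<alpha> = x powr \<beta>" if "\<alpha> \<noteq> 0"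
    using that x0 by (simp add: c_def powr_powr)
  have A: "?p x s = x powr (1-\<beta>)" if s: "0 \<le> s" "s < c" for s
  proof -
    have an: "\<alpha> \<noteq> 0" using s by (auto simp: c_def)
    have "s powr \<alpha> < c powr \<alpha>" using s an a by (intro powr_less_mono2) auto
    then show ?thesis using cpow[OF an] by (simp add: pp_def)
  qed
  have Bf: "?p t s = (1-\<alpha>) * t * s powr (-\<alpha>)" if s: "c < s" "s \<le> 1" and t: "t \<in> {0..x}" for s t
  proof (cases "\<alpha> = 0")
    case True
    have "t powr \<beta> \<le> 1" using t x b by (intro powr_le1) auto
    then show ?thesis using True s c01 by (simp add: pp_def)
  next
    case False
    have "t powr \<beta> \<le> x powr \<beta>" using t b by (intro powr_mono2) auto
    also have "\<dots> = c powr \<alpha>" using cpow[OF False] by simp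
    also have "\<dots> \<le> s powr \<alpha>" using s c01 a by (intro powr_mono2) auto
    finally show ?thesis by (simp add: pp_def)
  qed
  define K where "K = (LINT s:{0..1}|lborel. indicator {c<..1} s * (?p x s * ?p x s) / x)"
  have ik: "set_integrable lborel {0..1} (\<lambda>s. indicator {c<..1} s * (?p x s * ?p x s) / x)"
  proof (rule bdd_int[where B="1/x"])
    show "(\<lambda>s. indicator {c<..1} s * (?p x s * ?p x s) / x) \<in> borel_measurable borel" by measurable
    fix s :: real assume s: "s \<in> {0..1}"
    have "0 \<le> ?p x s" "?p x s \<le> 1" using pp_le1[OF x1 s a b] pp_nonneg[OF x1 _ a] s by auto
    then have "\<bar>?p x s * ?p x s\<bar> \<le> 1" by (simp add: abs_mult mult_le_one)
    then have "\<bar>indicator {c<..1} s * (?p x s * ?p x s)\<bar> \<le> 1" by (auto simp: indicator_def)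
    then show "\<bar>indicator {c<..1} s * (?p x s * ?p x s) / x\<bar> \<le> 1 / x"
      using x0 by (simp add: abs_div divide_right_mono)
  qed
  have "\<forall>t\<in>{0..x}. (LINT s:{0..1}|lborel. ?p t s * ?p x s) = (x powr (1-\<beta>) * c powr (1-\<alpha>) + K) * t"
  proof
    fix t assume t: "t \<in> {0..x}"
    then have t1: "t \<in> {0..1}" using x by auto
    have ia: "set_integrable lborel {0..1} (\<lambda>s. indicator {0..c} s * ?p t s)"
    proof (rule bdd_int[where B=1])
      show "(\<lambda>s. indicator {0..c} s * ?p t s) \<in> borel_measurable borel" by measurable
      fix s :: real assume s: "s \<in> {0..1}"
      have "0 \<le> ?p t s" "?p t s \<le> 1" using pp_le1[OF t1 s a b] pp_nonneg[OF t1 _ a] s by auto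
      then show "\<bar>indicator {0..c} s * ?p t s\<bar> \<le> 1" by (auto simp: indicator_def)
    qed
    have "(LINT s:{0..1}|lborel. ?p t s * ?p x s) =
          (LINT s:{0..1}|lborel. x powr (1-\<beta>) * (indicator {0..c} s * ?p t s) + t * (indicator {c<..1} s * (?p x s * ?p x s) / x))"
    proof (rule set_int_fin_diff[of "{c}"])
      fix s assume s: "s \<in> {0..1}" "s \<notin> {c}"
      show "?p t s * ?p x s = x powr (1-\<beta>) * (indicator {0..c} s * ?p t s) + t * (indicator {c<..1} s * (?p x s * ?p x s) / x)"
      proof (cases "s < c")
        case True
        then show ?thesis using A[of s] s by (auto simp: indicator_def)
      next
        case False
        then have cs: "c < s" using s by auto
        have e1: "?p t s = (1-\<alpha>) * t * s powr (-\<alpha>)" using Bf[OF cs _ t] s by auto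
        have e2: "?p x s = (1-\<alpha>) * x * s powr (-\<alpha>)" using Bf[OF cs, of x] s x0 by auto
        show ?thesis using cs s x0 unfolding e1 e2 by (auto simp: indicator_def field_simps)
      qed
    qed simp
    also have "\<dots> = x powr (1-\<beta>) * (LINT s:{0..1}|lborel. indicator {0..c} s * ?p t s) + t * K"
      unfolding K_def using set_integral_add(2)[OF set_integrable_mult_right[OF ia] set_integrable_mult_right[OF ik]]
      by simp
    also have "(LINT s:{0..1}|lborel. indicator {0..c} s * ?p t s) = (LINT s:{0..c}|lborel. ?p t s)"
      unfolding set_lebesgue_integral_def
      by (rule Bochner_Integration.integral_cong) (use c01 in \<open>auto simp: indicator_def\<close>)
    also have "\<dots> = MO \<beta> \<alpha> t c" by (rule int_pp[OF t1 c01 a b])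
    also have "\<dots> = t * c powr (1-\<alpha>)"
    proof (cases "\<alpha> = 0 \<or> t = 0")
      case True
      then show ?thesis by (auto simp: c_def)
    next
      case False
      have c0: "0 < c" using False x0 by (simp add: c_def)
      have "t powr \<beta> \<le> x powr \<beta>" using t b by (intro powr_mono2) auto
      then have "t powr \<beta> \<le> c powr \<alpha>" using cpow False by simp
      then show ?thesis using MO_eq2[of t c \<beta> \<alpha>] c0 False t by auto
    qed
    finally show "(LINT s:{0..1}|lborel. ?p t s * ?p x s) = (x powr (1-\<beta>) * c powr (1-\<alpha>) + K) * t"
      by (simp add: algebra_simps)
  qed
  then show ?thesis by blast
qed



theorem mainTheorem5:
  fixes \<alpha> \<beta> :: real
  assumes "\<alpha> \<in> {0..1}" and "\<beta> \<in> {0..1}"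
  shows "is_copula (star_prod (MO \<beta> \<alpha>) (MO \<alpha> \<beta>)) \<and>
         lower_semilinear (star_prod (MO \<beta> \<alpha>) (MO \<alpha> \<beta>))"
proof -
  note a = assms(1) and b = assms(2)
  let ?C = "star_prod (MO \<beta> \<alpha>) (MO \<alpha> \<beta>)"
  let ?p = "pp \<alpha> \<beta>"
  have comm: "(LINT s:{0..1}|lborel. ?p x s * ?p y s) = (LINT s:{0..1}|lborel. ?p y s * ?p x s)" for x y
    by (simp add: mult.commute)
  have bd: "?C u 0 = 0 \<and> ?C 0 u = 0 \<and> ?C u 1 = u \<and> ?C 1 u = u" if u: "u \<in> {0..1}" for u
  proof -
    have z: "(0::real) \<in> {0..1}" and o: "(1::real) \<in> {0..1}" by auto
    have "?C u 0 = 0" unfolding star_eq[OF u z a b] by simp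
    moreover have "?C 0 u = 0" unfolding star_eq[OF z u a b] by simp
    moreover have "?C u 1 = u" unfolding star_eq[OF u o a b] by (rule C_u1[OF u a b])
    moreover have "?C 1 u = u" unfolding star_eq[OF o u a b] comm[of 1 u] by (rule C_u1[OF u a b])
    ultimately show ?thesis by blast
  qed
  have inc: "?C u2 v2 - ?C u2 v1 - ?C u1 v2 + ?C u1 v1 \<ge> 0"
    if "0 \<le> u1 \<and> u1 \<le> u2 \<and> u2 \<le> 1 \<and> 0 \<le> v1 \<and> v1 \<le> v2 \<and> v2 \<le> 1" for u1 u2 v1 v2
  proof -
    have u1: "u1 \<in> {0..1}" and u2: "u2 \<in> {0..1}" and v1: "v1 \<in> {0..1}" and v2: "v2 \<in> {0..1}"
      and le1: "u1 \<le> u2" and le2: "v1 \<le> v2" using that by auto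
    show ?thesis
      unfolding star_eq[OF u1 v1 a b] star_eq[OF u1 v2 a b] star_eq[OF u2 v1 a b] star_eq[OF u2 v2 a b]
      by (rule two_inc[OF u1 u2 v1 v2 le1 le2 a b, unfolded Let_def])
  qed
  have ls: "lower_semilinear ?C"
    unfolding lower_semilinear_def
  proof
    fix x :: real assume x: "x \<in> {0<..1}"
    then have x1: "x \<in> {0..1}" by auto
    obtain A where A: "\<forall>t\<in>{0..x}. (LINT s:{0..1}|lborel. ?p t s * ?p x s) = A * t"
      using lsl[OF x a b] by blast
    have "\<forall>t\<in>{0..x}. ?C t x = A * t + 0"
    proof
      fix t assume t: "t \<in> {0..x}"
      then have t1: "t \<in> {0..1}" using x by auto
      show "?C t x = A * t + 0" unfolding star_eq[OF t1 x1 a b] using A t by simp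
    qed
    moreover have "\<forall>t\<in>{0..x}. ?C x t = A * t + 0"
    proof
      fix t assume t: "t \<in> {0..x}"
      then have t1: "t \<in> {0..1}" using x by auto
      show "?C x t = A * t + 0" unfolding star_eq[OF x1 t1 a b] comm[of x t] using A t by simp
    qed
    ultimately show "(\<exists>a b. \<forall>t\<in>{0..x}. ?C t x = a * t + b) \<and> (\<exists>a b. \<forall>t\<in>{0..x}. ?C x t = a * t + b)"
      by blast
  qed
  have "is_copula ?C" unfolding is_copula_def using bd inc by blast
  then show ?thesis using ls by blast
qed

end
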